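(* Every instance of the axiom schema (K1) $\Box(\alpha\to\beta)\to(\Diamond\alpha\to\Diamond\beta)$ is derivable in ${\bf Tmd}$.
   Context: Formulas are built from a denumerable set of propositional variables by the unary connectives $\neg$, $\Box$ and the binary connective $\to$; $For$ is the set of all formulas; $\Diamond\alpha:=\neg\Box\neg\alpha$. ${\bf Tmd}$ is the Hilbert calculus whose axioms are all instances (over $For$) of the axiom schemas of a standard Hilbert calculus for classical propositional logic in the signature $\{\neg,\to\}$, plus all instances of: (K) $\Box(\alpha\to\beta)\to(\Box\alpha\to\Box\beta)$; (Kdet) $\Box(\alpha\to\beta)\to(\Diamond\alpha\to\Box\beta)$; (K2) $\Diamond(\alpha\to\beta)\to(\Box\alpha\to\Diamond\beta)$; (M1) $\neg\Diamond\alpha\to\Box(\alpha\to\beta)$; (M2) $\Box\beta\to\Box(\alpha\to\beta)$; (M3) $\Diamond\beta\to\Diamond(\alpha\to\beta)$; (M4) $\Diamond\neg\alpha\to\Diamond(\alpha\to\beta)$; (T) $\Box\alpha\to\alpha$; (DN1) $\Box\alpha\to\Box\neg\neg\alpha$; (DN2) $\Box\neg\neg\alpha\to\Box\alpha$; modus ponens is the only inference rule. *)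

theory Defs
  imports Main
begin

datatype fm =
    Var nat
  | Neg fm
  | Box fm
  | Imp fm fm

definition Dia :: "fm \<Rightarrow> fm" where
  "Dia a = Neg (Box (Neg a))"

inductive Axiom :: "fm \<Rightarrow> bool" where
  A1: "Axiom (Imp a (Imp b a))"
| A2: "Axiom (Imp (Imp a (Imp b c)) (Imp (Imp a b) (Imp a c)))"
| A3: "Axiom (Imp (Imp (Neg a) (Neg b)) (Imp b a))"
| K: "Axiom (Imp (Box (Imp a b)) (Imp (Box a) (Box b)))"
| Kdet: "Axiom (Imp (Box (Imp a b)) (Imp (Dia a) (Box b)))"
| K2: "Axiom (Imp (Dia (Imp a b)) (Imp (Box a) (Dia b)))"
| M1: "Axiom (Imp (Neg (Dia a)) (Box (Imp a b)))"
| M2: "Axiom (Imp (Box b) (Box (Imp a b)))"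
| M3: "Axiom (Imp (Dia b) (Dia (Imp a b)))"
| M4: "Axiom (Imp (Dia (Neg a)) (Dia (Imp a b)))"
| T: "Axiom (Imp (Box a) a)"
| DN1: "Axiom (Imp (Box a) (Box (Neg (Neg a))))"
| DN2: "Axiom (Imp (Box (Neg (Neg a))) (Box a))"

inductive Tmd :: "fm \<Rightarrow> bool" where
  ax: "Axiom a \<Longrightarrow> Tmd a"
| mp: "Tmd a \<Longrightarrow> Tmd (Imp a b) \<Longrightarrow> Tmd b"

end

theory Submission
  imports Defs
begin

lemma ax1: "Tmd (Imp a (Imp b a))" by (rule Tmd.ax, rule Axiom.A1)
lemma ax2: "Tmd (Imp (Imp a (Imp b c)) (Imp (Imp a b) (Imp a c)))" by (rule Tmd.ax, rule Axiom.A2)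
lemma ax3: "Tmd (Imp (Imp (Neg a) (Neg b)) (Imp b a))" by (rule Tmd.ax, rule Axiom.A3)

lemma lift: "Tmd (Imp y z) \<Longrightarrow> Tmd (Imp (Imp x y) (Imp x z))"
  by (meson Tmd.mp ax1 ax2)

lemma syl: "Tmd (Imp x y) \<Longrightarrow> Tmd (Imp y z) \<Longrightarrow> Tmd (Imp x z)"
  by (meson Tmd.mp lift)

lemma idt: "Tmd (Imp a a)"
  by (meson Tmd.mp ax1 ax2)

lemma dne: "Tmd (Imp (Neg (Neg x)) x)"
proof -
  have "Tmd (Imp (Neg (Neg x)) (Imp (Neg (Neg x)) x))"
    by (meson syl ax1 ax3)
  then show ?thesis by (meson Tmd.mp ax2 idt)
qed

theorem mainTheorem12:
  shows "\<forall>a b. Tmd (Imp (Box (Imp a b)) (Imp (Dia a) (Dia b)))"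
proof (intro allI)
  fix a b
  have kd: "Tmd (Imp (Box (Imp a b)) (Imp (Dia a) (Box b)))" by (rule Tmd.ax, rule Axiom.Kdet)
  have t1: "Tmd (Imp (Box b) b)" by (rule Tmd.ax, rule Axiom.T)
  have t2: "Tmd (Imp (Box (Neg b)) (Neg b))" by (rule Tmd.ax, rule Axiom.T)
  have "Tmd (Imp (Neg (Neg (Box (Neg b)))) (Neg b))" by (rule syl[OF dne t2])
  then have "Tmd (Imp b (Dia b))" unfolding Dia_def by (meson Tmd.mp ax3)
  then have "Tmd (Imp (Box b) (Dia b))" by (rule syl[OF t1])
  then have "Tmd (Imp (Imp (Dia a) (Box b)) (Imp (Dia a) (Dia b)))" by (rule lift)
  then show "Tmd (Imp (Box (Imp a b)) (Imp (Dia a) (Dia b)))" by (rule syl[OF kd])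
qed

end
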